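(* If a vertical line $\Gamma$ sweeps from left to right, the only values of $x(\Gamma)$ at which the shadow of $\mathrm{OPT}$ at $\Gamma$ changes are $x$-coordinates of reflection points of $\mathrm{OPT}$. In particular, any subpath of $\mathrm{OPT}$ that does not contain a reflection point (as an interior point) has shadow $1$ throughout its length.
   Context: Instance: vertical line segments $s_1,\dots,s_n$ in $\mathbb{R}^2$, each of length $1$, with pairwise distinct $x$-coordinates. A tour is a cyclic sequence of points $p_1,\dots,p_\sigma$, each on some segment, with every segment containing at least one $p_j$; the straight segments joining consecutive points are legs. $\mathrm{OPT}$ is a fixed minimum-cost tour, oriented $p_1\to p_2\to\cdots$, with no two consecutive points on the same segment (no vertical legs) and not self-crossing. For a point $p_j$ of $\mathrm{OPT}$ on segment $s$, $p_j$ is a reflection point if both of its incident legs lie in the half-plane $x\le x(s)$ or both lie in $x\ge x(s)$. Shadow: for a collection of legs and $x_0$, the shadow at $x_0$ is the number of legs intersecting the vertical line $x=x_0$; the shadow of a path over a range is the maximum of this over the range. *)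

theory Defs
  imports "HOL-Analysis.Analysis"
begin

type_synonym point = "real \<times> real"

definition vseg :: "(nat \<Rightarrow> real) \<Rightarrow> (nat \<Rightarrow> real) \<Rightarrow> nat \<Rightarrow> point set" where
  "vseg xs ys i = {(xs i, y) | y. ys i \<le> y \<and> y \<le> ys i + 1}"

definition nxt :: "nat \<Rightarrow> nat \<Rightarrow> nat" where
  "nxt \<sigma> j = Suc j mod \<sigma>"

definition prv :: "nat \<Rightarrow> nat \<Rightarrow> nat" where
  "prv \<sigma> j = (j + \<sigma> - 1) mod \<sigma>"

definition is_tour :: "nat \<Rightarrow> (nat \<Rightarrow> real) \<Rightarrow> (nat \<Rightarrow> real) \<Rightarrow> nat \<Rightarrow> (nat \<Rightarrow> point) \<Rightarrow> bool" where
  "is_tour n xs ys \<sigma> p \<longleftrightarrow> 1 \<le> \<sigma> \<and>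
     (\<forall>j<\<sigma>. \<exists>i<n. p j \<in> vseg xs ys i) \<and>
     (\<forall>i<n. \<exists>j<\<sigma>. p j \<in> vseg xs ys i)"

definition tour_cost :: "nat \<Rightarrow> (nat \<Rightarrow> point) \<Rightarrow> real" where
  "tour_cost \<sigma> p = (\<Sum>j<\<sigma>. dist (p j) (p (nxt \<sigma> j)))"

definition is_opt_tour :: "nat \<Rightarrow> (nat \<Rightarrow> real) \<Rightarrow> (nat \<Rightarrow> real) \<Rightarrow> nat \<Rightarrow> (nat \<Rightarrow> point) \<Rightarrow> bool" where
  "is_opt_tour n xs ys \<sigma> p \<longleftrightarrow> is_tour n xs ys \<sigma> p \<and>
     (\<forall>\<sigma>' p'. is_tour n xs ys \<sigma>' p' \<longrightarrow> tour_cost \<sigma> p \<le> tour_cost \<sigma>' p')"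

definition no_vertical_legs :: "nat \<Rightarrow> (nat \<Rightarrow> real) \<Rightarrow> (nat \<Rightarrow> real) \<Rightarrow> nat \<Rightarrow> (nat \<Rightarrow> point) \<Rightarrow> bool" where
  "no_vertical_legs n xs ys \<sigma> p \<longleftrightarrow>
     (\<forall>j<\<sigma>. \<not> (\<exists>i<n. p j \<in> vseg xs ys i \<and> p (nxt \<sigma> j) \<in> vseg xs ys i))"

definition legs_cross :: "point \<Rightarrow> point \<Rightarrow> point \<Rightarrow> point \<Rightarrow> bool" where
  "legs_cross a b c d \<longleftrightarrow> open_segment a b \<inter> open_segment c d \<noteq> {} \<and> \<not> collinear {a, b, c, d}"

definition not_self_crossing :: "nat \<Rightarrow> (nat \<Rightarrow> point) \<Rightarrow> bool" where
  "not_self_crossing \<sigma> p \<longleftrightarrow>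
     (\<forall>i<\<sigma>. \<forall>j<\<sigma>. i \<noteq> j \<longrightarrow> \<not> legs_cross (p i) (p (nxt \<sigma> i)) (p j) (p (nxt \<sigma> j)))"

definition reflection_point :: "nat \<Rightarrow> (nat \<Rightarrow> point) \<Rightarrow> nat \<Rightarrow> bool" where
  "reflection_point \<sigma> p j \<longleftrightarrow>
     (fst (p (prv \<sigma> j)) \<le> fst (p j) \<and> fst (p (nxt \<sigma> j)) \<le> fst (p j)) \<or>
     (fst (p (prv \<sigma> j)) \<ge> fst (p j) \<and> fst (p (nxt \<sigma> j)) \<ge> fst (p j))"

definition leg_meets :: "nat \<Rightarrow> (nat \<Rightarrow> point) \<Rightarrow> nat \<Rightarrow> real \<Rightarrow> bool" where
  "leg_meets \<sigma> p j x0 \<longleftrightarrow> closed_segment (p j) (p (nxt \<sigma> j)) \<inter> {z. fst z = x0} \<noteq> {}"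

definition shadow :: "nat \<Rightarrow> (nat \<Rightarrow> point) \<Rightarrow> nat set \<Rightarrow> real \<Rightarrow> nat" where
  "shadow \<sigma> p J x0 = card {j \<in> J. leg_meets \<sigma> p j x0}"

end

theory Submission
  imports Defs
begin

lemma leg_meets_iff:
  "leg_meets \<sigma> p j x \<longleftrightarrow> x \<in> closed_segment (fst (p j)) (fst (p (nxt \<sigma> j)))"
proof -
  have "closed_segment (fst (p j)) (fst (p (nxt \<sigma> j))) = fst ` closed_segment (p j) (p (nxt \<sigma> j))"
    by (rule closed_segment_linear_image) (rule linear_fst)
  then show ?thesis unfolding leg_meets_def by auto
qed

lemma nxt_lt: "0 < \<sigma> \<Longrightarrow> nxt \<sigma> j < \<sigma>" by (simp add: nxt_def)
lemma prv_lt: "0 < \<sigma> \<Longrightarrow> prv \<sigma> j < \<sigma>" by (simp add: prv_def)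
lemma prv_eq: "k < \<sigma> \<Longrightarrow> prv \<sigma> k = (if k = 0 then \<sigma> - 1 else k - 1)"
proof (cases "k = 0")
  case True assume "k < \<sigma>" then show ?thesis using True by (simp add: prv_def)
next
  case False assume k: "k < \<sigma>"
  have "k + \<sigma> - 1 = (k - 1) + \<sigma>" using False by simp
  then have "prv \<sigma> k = (k - 1) mod \<sigma>" by (simp add: prv_def)
  then show ?thesis using False k by simp
qed
lemma nxt_eq: "k < \<sigma> \<Longrightarrow> nxt \<sigma> k = (if k = \<sigma> - 1 then 0 else k + 1)"
  unfolding nxt_def by (cases "Suc k = \<sigma>") auto
lemma nxt_prv: "0 < \<sigma> \<Longrightarrow> k < \<sigma> \<Longrightarrow> nxt \<sigma> (prv \<sigma> k) = k"
  by (cases k) (auto simp add: prv_eq nxt_eq)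
lemma prv_nxt: "0 < \<sigma> \<Longrightarrow> k < \<sigma> \<Longrightarrow> prv \<sigma> (nxt \<sigma> k) = k"
  by (simp add: prv_eq nxt_eq)

definition strad :: "real \<Rightarrow> real \<Rightarrow> real \<Rightarrow> bool" where
  "strad a b x \<longleftrightarrow> (a < x \<and> x < b) \<or> (b < x \<and> x < a)"

definition NR :: "nat \<Rightarrow> (nat \<Rightarrow> real) \<Rightarrow> nat \<Rightarrow> bool" where
  "NR \<sigma> X j \<longleftrightarrow> (X (prv \<sigma> j) < X j \<and> X j < X (nxt \<sigma> j)) \<or> (X (prv \<sigma> j) > X j \<and> X j > X (nxt \<sigma> j))"

lemma L1:
  fixes X :: "nat \<Rightarrow> real"
  assumes s: "0 < \<sigma>" and r: "x0 < c" "c < x1"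
    and nopt: "\<forall>j<\<sigma>. X j \<noteq> x0 \<and> X j \<noteq> x1"
    and onlyc: "\<forall>j<\<sigma>. x0 < X j \<and> X j < x1 \<longrightarrow> X j = c"
    and nr: "\<forall>j<\<sigma>. X j = c \<longrightarrow> NR \<sigma> X j"
  shows "card {j. j<\<sigma> \<and> strad (X j) (X (nxt \<sigma> j)) x0 \<and> \<not> strad (X j) (X (nxt \<sigma> j)) x1}
       = card {k. k<\<sigma> \<and> X k = c}"
proof -
  define C where "C = {k. k<\<sigma> \<and> X k = c}"
  define D where "D = {j. j<\<sigma> \<and> strad (X j) (X (nxt \<sigma> j)) x0 \<and> \<not> strad (X j) (X (nxt \<sigma> j)) x1}"
  define f where "f k = (if X (prv \<sigma> k) < c then prv \<sigma> k else k)" for k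
  have lt: "X j < x0" if j: "j < \<sigma>" and jc: "X j < c" for j
  proof (rule ccontr)
    assume "\<not> X j < x0"
    moreover have "X j \<noteq> x0" using nopt j by blast
    ultimately have "x0 < X j" by linarith
    moreover have "X j < x1" using jc r by linarith
    ultimately have "X j = c" using onlyc j by blast
    then show False using jc by simp
  qed
  have inj: "inj_on f C"
  proof (rule inj_onI)
    fix a b assume a: "a \<in> C" and b: "b \<in> C" and e: "f a = f b"
    show "a = b"
    proof (cases "X (prv \<sigma> a) < c"; cases "X (prv \<sigma> b) < c")
      assume "X (prv \<sigma> a) < c" "X (prv \<sigma> b) < c"
      then have "prv \<sigma> a = prv \<sigma> b" using e by (simp add: f_def)
      then have "nxt \<sigma> (prv \<sigma> a) = nxt \<sigma> (prv \<sigma> b)" by simp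
      moreover have "a < \<sigma>" "b < \<sigma>" using a b unfolding C_def by auto
      ultimately show ?thesis using nxt_prv[OF s] by simp
    next
      assume "X (prv \<sigma> a) < c" "\<not> X (prv \<sigma> b) < c"
      then have "prv \<sigma> a = b" using e by (simp add: f_def)
      then show ?thesis using b \<open>X (prv \<sigma> a) < c\<close> unfolding C_def by auto
    next
      assume "\<not> X (prv \<sigma> a) < c" "X (prv \<sigma> b) < c"
      then have "prv \<sigma> b = a" using e by (simp add: f_def)
      then show ?thesis using a \<open>X (prv \<sigma> b) < c\<close> unfolding C_def by auto
    next
      assume "\<not> X (prv \<sigma> a) < c" "\<not> X (prv \<sigma> b) < c"
      then show ?thesis using e by (simp add: f_def)
    qed
  qed
  have img: "f ` C = D"
  proof
    show "f ` C \<subseteq> D"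
    proof
      fix j assume "j \<in> f ` C"
      then obtain k where k: "k \<in> C" "j = f k" by auto
      have kk: "k < \<sigma>" "X k = c" using k C_def by auto
      have "NR \<sigma> X k" using nr kk by auto
      show "j \<in> D"
      proof (cases "X (prv \<sigma> k) < c")
        case True
        then have "j = prv \<sigma> k" using k f_def by simp
        moreover have "X (prv \<sigma> k) < x0" using lt True prv_lt s by blast
        ultimately show ?thesis unfolding D_def strad_def using nxt_prv[OF s kk(1)] prv_lt[OF s] kk r by auto
      next
        case False
        then have "j = k" using k f_def by simp
        moreover have "X (nxt \<sigma> k) < c" using False \<open>NR \<sigma> X k\<close> kk unfolding NR_def by auto
        moreover have "X (nxt \<sigma> k) < x0" using lt calculation nxt_lt s by blast
        ultimately show ?thesis unfolding D_def strad_def using kk r by auto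
      qed
    qed
  next
    show "D \<subseteq> f ` C"
    proof
      fix j assume "j \<in> D"
      then have j: "j < \<sigma>" "strad (X j) (X (nxt \<sigma> j)) x0" "\<not> strad (X j) (X (nxt \<sigma> j)) x1"
        unfolding D_def by auto
      have n: "nxt \<sigma> j < \<sigma>" using nxt_lt s by blast
      show "j \<in> f ` C"
      proof (cases "X j < x0")
        case True
        then have "x0 < X (nxt \<sigma> j)" using j strad_def by auto
        moreover have "X (nxt \<sigma> j) \<noteq> x1" using nopt n by blast
        moreover have "X (nxt \<sigma> j) < x1" using j(3) True calculation r unfolding strad_def
          by auto
        ultimately have c: "X (nxt \<sigma> j) = c" using onlyc n by auto
        have "f (nxt \<sigma> j) = j" unfolding f_def using prv_nxt[OF s j(1)] True r by auto
        moreover have "nxt \<sigma> j \<in> C" using c n C_def by blast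
        ultimately show ?thesis by (metis image_eqI)
      next
        case False
        then have a: "x0 < X j" "X (nxt \<sigma> j) < x0" using j strad_def by auto
        moreover have "X j \<noteq> x1" using nopt j(1) by blast
        moreover have "X j < x1" using j(3) a r calculation unfolding strad_def
          by auto
        ultimately have c: "X j = c" using onlyc j by auto
        have "NR \<sigma> X j" using nr c j by auto
        then have "\<not> X (prv \<sigma> j) < c" using a c r unfolding NR_def by auto
        then have "f j = j" unfolding f_def by auto
        moreover have "j \<in> C" using c j C_def by blast
        ultimately show ?thesis by (metis image_eqI)
      qed
    qed
  qed
  have "card D = card C" using img inj card_image by fastforce
  then show ?thesis unfolding C_def D_def .
qed

lemma strad_neg: "strad (- a) (- b) (- x) = strad a b x"
  unfolding strad_def by auto

lemma NR_neg: "NR \<sigma> (\<lambda>j. - X j) j = NR \<sigma> X j"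
  unfolding NR_def by auto

lemma L2:
  fixes X :: "nat \<Rightarrow> real"
  assumes s: "0 < \<sigma>" and r: "x0 < c" "c < x1"
    and nopt: "\<forall>j<\<sigma>. X j \<noteq> x0 \<and> X j \<noteq> x1"
    and onlyc: "\<forall>j<\<sigma>. x0 < X j \<and> X j < x1 \<longrightarrow> X j = c"
    and nr: "\<forall>j<\<sigma>. X j = c \<longrightarrow> NR \<sigma> X j"
  shows "card {j. j<\<sigma> \<and> strad (X j) (X (nxt \<sigma> j)) x0}
       = card {j. j<\<sigma> \<and> strad (X j) (X (nxt \<sigma> j)) x1}"
proof -
  define A where "A = {j. j<\<sigma> \<and> strad (X j) (X (nxt \<sigma> j)) x0}"
  define B where "B = {j. j<\<sigma> \<and> strad (X j) (X (nxt \<sigma> j)) x1}"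
  have fA: "finite A" "finite B" unfolding A_def B_def by auto
  have d1: "card (A - B) = card {k. k<\<sigma> \<and> X k = c}"
  proof -
    have "A - B = {j. j<\<sigma> \<and> strad (X j) (X (nxt \<sigma> j)) x0 \<and> \<not> strad (X j) (X (nxt \<sigma> j)) x1}"
      unfolding A_def B_def by auto
    then show ?thesis using L1[OF assms] by simp
  qed
  have d2: "card (B - A) = card {k. k<\<sigma> \<and> X k = c}"
  proof -
    have "B - A = {j. j<\<sigma> \<and> strad (- X j) (- X (nxt \<sigma> j)) (- x1) \<and> \<not> strad (- X j) (- X (nxt \<sigma> j)) (- x0)}"
      unfolding A_def B_def strad_neg by auto
    moreover have "card {j. j<\<sigma> \<and> strad (- X j) (- X (nxt \<sigma> j)) (- x1) \<and> \<not> strad (- X j) (- X (nxt \<sigma> j)) (- x0)}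
       = card {k. k<\<sigma> \<and> - X k = - c}"
    proof (rule L1[of \<sigma> "- x1" "- c" "- x0" "\<lambda>j. - X j"])
      show "0 < \<sigma>" by fact
      show "- x1 < - c" "- c < - x0" using r by auto
      show "\<forall>j<\<sigma>. - X j \<noteq> - x1 \<and> - X j \<noteq> - x0" using nopt by auto
      show "\<forall>j<\<sigma>. - x1 < - X j \<and> - X j < - x0 \<longrightarrow> - X j = - c"
      proof (intro allI impI)
        fix j assume "j < \<sigma>" "- x1 < - X j \<and> - X j < - x0"
        then show "- X j = - c" using onlyc by force
      qed
      show "\<forall>j<\<sigma>. - X j = - c \<longrightarrow> NR \<sigma> (\<lambda>j. - X j) j"
        unfolding NR_neg using nr by simp
    qed
    ultimately show ?thesis by simp
  qed
  have "card A = card (A \<inter> B) + card (A - B)"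
    using fA(1) by (rule card_Int_Diff)
  moreover have "card B = card (A \<inter> B) + card (B - A)"
    using card_Int_Diff[OF fA(2), of A] by (simp add: Int_commute)
  ultimately have "card A = card B" using d1 d2 by linarith
  then show ?thesis unfolding A_def B_def .
qed

lemma L3:
  fixes X :: "nat \<Rightarrow> real"
  assumes s: "0 < \<sigma>" and r: "x0 < x1"
    and nopt: "\<forall>j<\<sigma>. X j \<noteq> x0 \<and> X j \<noteq> x1"
    and nr: "\<forall>j<\<sigma>. x0 < X j \<and> X j < x1 \<longrightarrow> NR \<sigma> X j"
  shows "card {j. j<\<sigma> \<and> strad (X j) (X (nxt \<sigma> j)) x0}
       = card {j. j<\<sigma> \<and> strad (X j) (X (nxt \<sigma> j)) x1}"
  using r nopt nr
proof (induction "card (X ` {j. j<\<sigma> \<and> x0 < X j \<and> X j < x1})" arbitrary: x0 rule: less_induct)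
  case less
  define S where "S = X ` {j. j<\<sigma> \<and> x0 < X j \<and> X j < x1}"
  have fS: "finite S" unfolding S_def by auto
  show ?case
  proof (cases "S = {}")
    case True
    show ?thesis
      by (rule L2[OF s, of x0 "(x0+x1)/2"]) (use less.prems True S_def in auto)
  next
    case False
    define c where "c = Min S"
    have cS: "c \<in> S" using False fS c_def by auto
    have cmin: "\<And>v. v \<in> S \<Longrightarrow> c \<le> v" using fS c_def by auto
    have crange: "x0 < c" "c < x1" using cS S_def by auto
    show ?thesis
    proof (cases "S - {c} = {}")
      case True
      show ?thesis
        by (rule L2[OF s, of x0 c]) (use less.prems True S_def crange in auto)
    next
      case F2: False
      define c' where "c' = Min (S - {c})"
      have c'S: "c' \<in> S - {c}" using F2 fS c'_def Min_in[of "S - {c}"] by auto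
      have c'min: "\<And>v. v \<in> S - {c} \<Longrightarrow> c' \<le> v" using fS c'_def by auto
      have cc': "c < c'" using c'S cmin by force
      have c'r: "c' < x1" using c'S S_def by auto
      define y where "y = (c + c') / 2"
      have yr: "c < y" "y < c'" using cc' y_def by auto
      have step1: "card {j. j<\<sigma> \<and> strad (X j) (X (nxt \<sigma> j)) x0}
         = card {j. j<\<sigma> \<and> strad (X j) (X (nxt \<sigma> j)) y}"
      proof (rule L2[OF s, of x0 c y])
        show "x0 < c" "c < y" by fact+
        show "\<forall>j<\<sigma>. X j \<noteq> x0 \<and> X j \<noteq> y"
        proof (intro allI impI conjI)
          fix j assume j: "j < \<sigma>"
          show "X j \<noteq> x0" using less.prems j by auto
          show "X j \<noteq> y"
          proof
            assume e: "X j = y"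
            then have "X j \<in> S" unfolding S_def using j crange yr c'r by auto
            then have "X j \<in> S - {c}" using e yr by auto
            then show False using c'min yr e by force
          qed
        qed
        show "\<forall>j<\<sigma>. x0 < X j \<and> X j < y \<longrightarrow> X j = c"
        proof (intro allI impI)
          fix j assume j: "j < \<sigma>" "x0 < X j \<and> X j < y"
          then have "X j \<in> S" unfolding S_def using yr c'r by auto
          then show "X j = c" using c'min j yr by force
        qed
        show "\<forall>j<\<sigma>. X j = c \<longrightarrow> NR \<sigma> X j" using less.prems crange by auto
      qed
      have sub: "X ` {j. j<\<sigma> \<and> y < X j \<and> X j < x1} \<subseteq> S - {c}"
        unfolding S_def using crange yr by auto
      have "card (X ` {j. j<\<sigma> \<and> y < X j \<and> X j < x1}) < card S"
        using le_less_trans[OF card_mono[OF _ sub] card_Diff1_less[OF fS cS]] fS by blast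
      then have step2: "card {j. j<\<sigma> \<and> strad (X j) (X (nxt \<sigma> j)) y}
         = card {j. j<\<sigma> \<and> strad (X j) (X (nxt \<sigma> j)) x1}"
      proof (rule less.hyps[unfolded S_def[symmetric]])
        show "y < x1" using yr c'r by auto
        show "\<forall>j<\<sigma>. X j \<noteq> y \<and> X j \<noteq> x1"
        proof (intro allI impI conjI)
          fix j assume j: "j < \<sigma>"
          show "X j \<noteq> x1" using less.prems j by auto
          show "X j \<noteq> y"
          proof
            assume e: "X j = y"
            then have "X j \<in> S" unfolding S_def using j crange yr c'r by auto
            then have "X j \<in> S - {c}" using e yr by auto
            then show False using c'min yr e by force
          qed
        qed
        show "\<forall>j<\<sigma>. y < X j \<and> X j < x1 \<longrightarrow> NR \<sigma> X j" using less.prems crange yr by auto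
      qed
      show ?thesis using step1 step2 by simp
    qed
  qed
qed

lemma chain_mono:
  fixes Y :: "nat \<Rightarrow> real"
  assumes inc: "\<forall>t<k. Y t < Y (Suc t)"
  shows "i \<le> j \<Longrightarrow> j \<le> k \<Longrightarrow> Y i \<le> Y j"
proof (induction j)
  case 0 then show ?case by simp
next
  case (Suc j)
  show ?case
  proof (cases "i = Suc j")
    case True then show ?thesis by simp
  next
    case False
    then have "i \<le> j" using Suc.prems by simp
    then have "Y i \<le> Y j" using Suc by simp
    moreover have "Y j < Y (Suc j)" using inc Suc.prems by simp
    ultimately show ?thesis by simp
  qed
qed

lemma P2inc:
  fixes Y :: "nat \<Rightarrow> real"
  assumes inc: "\<forall>t<k. Y t < Y (Suc t)"
    and nox: "\<forall>t. 0 < t \<and> t < k \<longrightarrow> Y t \<noteq> x"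
    and t12: "t1 < t2" "t2 < k"
    and m1: "x \<in> closed_segment (Y t1) (Y (Suc t1))"
    and m2: "x \<in> closed_segment (Y t2) (Y (Suc t2))"
  shows False
proof -
  have "Y t1 < Y (Suc t1)" "Y t2 < Y (Suc t2)" using inc t12 by auto
  then have a: "x \<le> Y (Suc t1)" "Y t2 \<le> x" using m1 m2 closed_segment_eq_real_ivl by auto
  have "Y (Suc t1) \<le> Y t2" using chain_mono[OF inc, of "Suc t1" t2] t12 by simp
  then have "Y (Suc t1) = x" using a by simp
  moreover have "0 < Suc t1" "Suc t1 < k" using t12 by auto
  ultimately show False using nox by blast
qed

lemma P2:
  fixes Y :: "nat \<Rightarrow> real"
  assumes nr: "\<forall>t. 0 < t \<and> t < k \<longrightarrow> (Y (t - 1) < Y t \<and> Y t < Y (Suc t)) \<or> (Y (t - 1) > Y t \<and> Y t > Y (Suc t))"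
    and nox: "\<forall>t. 0 < t \<and> t < k \<longrightarrow> Y t \<noteq> x"
    and t12: "t1 < t2" "t2 < k"
    and m1: "x \<in> closed_segment (Y t1) (Y (Suc t1))"
    and m2: "x \<in> closed_segment (Y t2) (Y (Suc t2))"
  shows False
proof -
  have k2: "0 < (1::nat)" "1 < k" using t12 by auto
  then have nr1: "(Y 0 < Y 1 \<and> Y 1 < Y 2) \<or> (Y 0 > Y 1 \<and> Y 1 > Y 2)"
    using nr[rule_format, of 1] by (simp add: numeral_2_eq_2)
  show False
  proof (cases "Y 0 < Y 1")
    case True
    have inc: "\<forall>t<k. Y t < Y (Suc t)"
    proof (intro allI impI)
      fix t assume "t < k" then show "Y t < Y (Suc t)"
      proof (induction t)
        case 0 then show ?case using True by simp
      next
        case (Suc t)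
        then have "Y t < Y (Suc t)" by simp
        then show ?case using nr[rule_format, of "Suc t"] Suc.prems by auto
      qed
    qed
    show False by (rule P2inc[OF inc nox t12 m1 m2])
  next
    case False
    then have F: "Y 1 < Y 0" using nr1 by auto
    have inc: "\<forall>t<k. - Y t < - Y (Suc t)"
    proof (intro allI impI)
      fix t assume "t < k" then show "- Y t < - Y (Suc t)"
      proof (induction t)
        case 0 then show ?case using F by simp
      next
        case (Suc t)
        then have "Y t > Y (Suc t)" by simp
        then show ?case using nr[rule_format, of "Suc t"] Suc.prems by auto
      qed
    qed
    have nox': "\<forall>t. 0 < t \<and> t < k \<longrightarrow> - Y t \<noteq> - x" using nox by auto
    have neg: "\<And>a b. x \<in> closed_segment a b \<Longrightarrow> - x \<in> closed_segment (- a) (- b)"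
      by (auto simp: closed_segment_eq_real_ivl split: if_splits)
    show False by (rule P2inc[OF inc nox' t12 neg[OF m1] neg[OF m2]])
  qed
qed

lemma nxt_mod: "0 < \<sigma> \<Longrightarrow> nxt \<sigma> ((s + t) mod \<sigma>) = (s + Suc t) mod \<sigma>"
  unfolding nxt_def by (simp add: mod_Suc_eq)

lemma prv_mod: "0 < \<sigma> \<Longrightarrow> 0 < t \<Longrightarrow> prv \<sigma> ((s + t) mod \<sigma>) = (s + (t - 1)) mod \<sigma>"
proof -
  assume s: "0 < \<sigma>" and t: "0 < t"
  have "prv \<sigma> ((s + t) mod \<sigma>) = ((s + t) mod \<sigma> + (\<sigma> - 1)) mod \<sigma>"
    unfolding prv_def using s by (simp add: add.commute)
  also have "\<dots> = (s + t + (\<sigma> - 1)) mod \<sigma>" by (simp add: mod_add_left_eq)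
  also have "s + t + (\<sigma> - 1) = (s + (t - 1)) + \<sigma>" using s t by simp
  finally show ?thesis by simp
qed

lemma mod_inj:
  fixes s k \<sigma> :: nat
  assumes "k \<le> \<sigma>"
  shows "inj_on (\<lambda>t. (s + t) mod \<sigma>) {t. t < k \<and> P t}"
proof (rule inj_onI)
  fix a b assume a: "a \<in> {t. t < k \<and> P t}" and b: "b \<in> {t. t < k \<and> P t}"
    and e: "(s + a) mod \<sigma> = (s + b) mod \<sigma>"
  have "a mod \<sigma> = b mod \<sigma>" using e by (simp add: nat_mod_eq_iff)
  then show "a = b" using a b assms by simp
qed

lemma not_refl_NR:
  "\<not> reflection_point \<sigma> p j \<Longrightarrow> NR \<sigma> (\<lambda>j. fst (p j)) j"
  unfolding reflection_point_def NR_def by auto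

theorem lemma3:
  fixes n \<sigma> :: nat and xs ys :: "nat \<Rightarrow> real" and p :: "nat \<Rightarrow> real \<times> real"
  assumes distinct_x: "inj_on xs {..<n}"
    and opt: "is_opt_tour n xs ys \<sigma> p"
    and novert: "no_vertical_legs n xs ys \<sigma> p"
    and nocross: "not_self_crossing \<sigma> p"
  shows "(\<forall>x0 x1. x0 < x1 \<longrightarrow>
            (\<forall>j<\<sigma>. fst (p j) \<noteq> x0 \<and> fst (p j) \<noteq> x1) \<longrightarrow>
            (\<forall>j<\<sigma>. reflection_point \<sigma> p j \<longrightarrow> fst (p j) \<notin> {x0..x1}) \<longrightarrow>
            shadow \<sigma> p {..<\<sigma>} x0 = shadow \<sigma> p {..<\<sigma>} x1)
       \<and> (\<forall>s k x0. s < \<sigma> \<longrightarrow> 1 \<le> k \<longrightarrow> k \<le> \<sigma> \<longrightarrow>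
            (\<forall>t. 0 < t \<and> t < k \<longrightarrow> \<not> reflection_point \<sigma> p ((s + t) mod \<sigma>)) \<longrightarrow>
            (\<exists>t<k. leg_meets \<sigma> p ((s + t) mod \<sigma>) x0) \<longrightarrow>
            (\<forall>t. 0 < t \<and> t < k \<longrightarrow> fst (p ((s + t) mod \<sigma>)) \<noteq> x0) \<longrightarrow>
            shadow \<sigma> p {(s + t) mod \<sigma> | t. t < k} x0 = 1)"
proof -
  have sg: "0 < \<sigma>" using opt unfolding is_opt_tour_def is_tour_def by auto
  define X where "X j = fst (p j)" for j
  have sh: "shadow \<sigma> p {..<\<sigma>} x = card {j. j<\<sigma> \<and> strad (X j) (X (nxt \<sigma> j)) x}"
    if nx: "\<forall>j<\<sigma>. X j \<noteq> x" for x
  proof -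
    have "{j \<in> {..<\<sigma>}. leg_meets \<sigma> p j x} = {j. j<\<sigma> \<and> strad (X j) (X (nxt \<sigma> j)) x}"
    proof (intro set_eqI iffI)
      fix j assume "j \<in> {j \<in> {..<\<sigma>}. leg_meets \<sigma> p j x}"
      then have j: "j < \<sigma>" "x \<in> closed_segment (X j) (X (nxt \<sigma> j))"
        unfolding leg_meets_iff X_def by auto
      moreover have "X j \<noteq> x" "X (nxt \<sigma> j) \<noteq> x" using nx j nxt_lt[OF sg] by auto
      ultimately show "j \<in> {j. j<\<sigma> \<and> strad (X j) (X (nxt \<sigma> j)) x}"
        unfolding strad_def by (auto simp: closed_segment_eq_real_ivl split: if_splits)
    next
      fix j assume "j \<in> {j. j<\<sigma> \<and> strad (X j) (X (nxt \<sigma> j)) x}"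
      then have j: "j < \<sigma>" "strad (X j) (X (nxt \<sigma> j)) x" by auto
      then have "x \<in> closed_segment (X j) (X (nxt \<sigma> j))"
        unfolding strad_def by (auto simp: closed_segment_eq_real_ivl)
      then show "j \<in> {j \<in> {..<\<sigma>}. leg_meets \<sigma> p j x}"
        using j unfolding leg_meets_iff X_def by auto
    qed
    then show ?thesis unfolding shadow_def by simp
  qed
  have part1: "shadow \<sigma> p {..<\<sigma>} x0 = shadow \<sigma> p {..<\<sigma>} x1"
    if r: "x0 < x1" and nopt: "\<forall>j<\<sigma>. fst (p j) \<noteq> x0 \<and> fst (p j) \<noteq> x1"
      and rf: "\<forall>j<\<sigma>. reflection_point \<sigma> p j \<longrightarrow> fst (p j) \<notin> {x0..x1}" for x0 x1
  proof -
    have nopt': "\<forall>j<\<sigma>. X j \<noteq> x0 \<and> X j \<noteq> x1" using nopt X_def by auto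
    have nr: "\<forall>j<\<sigma>. x0 < X j \<and> X j < x1 \<longrightarrow> NR \<sigma> X j"
    proof (intro allI impI)
      fix j assume j: "j < \<sigma>" "x0 < X j \<and> X j < x1"
      then have "\<not> reflection_point \<sigma> p j" using rf X_def by auto
      then show "NR \<sigma> X j" using not_refl_NR unfolding X_def[abs_def] by blast
    qed
    have "shadow \<sigma> p {..<\<sigma>} x0 = card {j. j<\<sigma> \<and> strad (X j) (X (nxt \<sigma> j)) x0}"
      using sh nopt' by auto
    also have "\<dots> = card {j. j<\<sigma> \<and> strad (X j) (X (nxt \<sigma> j)) x1}"
      by (rule L3[OF sg r nopt' nr])
    also have "\<dots> = shadow \<sigma> p {..<\<sigma>} x1"
      using sh nopt' by auto
    finally show ?thesis .
  qed
  have part2: "shadow \<sigma> p {(s + t) mod \<sigma> | t. t < k} x0 = 1"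
    if s: "s < \<sigma>" and k: "1 \<le> k" "k \<le> \<sigma>"
      and rf: "\<forall>t. 0 < t \<and> t < k \<longrightarrow> \<not> reflection_point \<sigma> p ((s + t) mod \<sigma>)"
      and ex: "\<exists>t<k. leg_meets \<sigma> p ((s + t) mod \<sigma>) x0"
      and nox: "\<forall>t. 0 < t \<and> t < k \<longrightarrow> fst (p ((s + t) mod \<sigma>)) \<noteq> x0"
    for s k x0
  proof -
    define Y where "Y t = X ((s + t) mod \<sigma>)" for t
    define M where "M t = leg_meets \<sigma> p ((s + t) mod \<sigma>) x0" for t
    have Mi: "M t \<longleftrightarrow> x0 \<in> closed_segment (Y t) (Y (Suc t))" for t
      unfolding M_def leg_meets_iff Y_def X_def nxt_mod[OF sg] by simp
    have nrY: "\<forall>t. 0 < t \<and> t < k \<longrightarrow> (Y (t - 1) < Y t \<and> Y t < Y (Suc t)) \<or> (Y (t - 1) > Y t \<and> Y t > Y (Suc t))"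
    proof (intro allI impI)
      fix t assume t: "0 < t \<and> t < k"
      then have "NR \<sigma> X ((s + t) mod \<sigma>)" using rf not_refl_NR unfolding X_def[abs_def] by blast
      moreover have "prv \<sigma> ((s + t) mod \<sigma>) = (s + (t - 1)) mod \<sigma>" using t prv_mod[OF sg] by blast
      moreover have "nxt \<sigma> ((s + t) mod \<sigma>) = (s + Suc t) mod \<sigma>" using nxt_mod[OF sg] by blast
      ultimately show "(Y (t - 1) < Y t \<and> Y t < Y (Suc t)) \<or> (Y (t - 1) > Y t \<and> Y t > Y (Suc t))"
        unfolding NR_def Y_def by metis
    qed
    have noxY: "\<forall>t. 0 < t \<and> t < k \<longrightarrow> Y t \<noteq> x0" using nox unfolding Y_def X_def by simp
    have seteq: "{j \<in> {(s + t) mod \<sigma> | t. t < k}. leg_meets \<sigma> p j x0}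
        = (\<lambda>t. (s + t) mod \<sigma>) ` {t. t < k \<and> M t}"
      unfolding M_def by auto
    obtain t0 where t0: "t0 < k" "M t0" using ex M_def by auto
    have single: "{t. t < k \<and> M t} = {t0}"
    proof (intro set_eqI iffI)
      fix t assume "t \<in> {t. t < k \<and> M t}"
      then have t: "t < k" "M t" by auto
      show "t \<in> {t0}"
      proof (cases t t0 rule: linorder_cases)
        case less
        then show ?thesis using P2[OF nrY noxY less t0(1)] t t0 Mi by blast
      next
        case equal then show ?thesis by simp
      next
        case greater
        then show ?thesis using P2[OF nrY noxY greater t(1)] t t0 Mi by blast
      qed
    next
      fix t assume "t \<in> {t0}"
      then show "t \<in> {t. t < k \<and> M t}" using t0 by auto
    qed
    have "shadow \<sigma> p {(s + t) mod \<sigma> | t. t < k} x0 = card ((\<lambda>t. (s + t) mod \<sigma>) ` {t. t < k \<and> M t})"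
      unfolding shadow_def seteq ..
    also have "\<dots> = card {t. t < k \<and> M t}"
      by (rule card_image[OF mod_inj[OF k(2)]])
    also have "\<dots> = 1" using single by simp
    finally show ?thesis .
  qed
  show ?thesis using part1 part2 by blast
qed

end
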